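(* Let $2<\alpha<4$ and $0<N_1\le N_2$. Consider the two-player Random Access Game in which player $i\in\{1,2\}$ chooses $\Lambda_i\in[0,N_i]$ and receives payoff \[ U_i(\Lambda_1,\Lambda_2)=\sup_{\beta>0}\ \Lambda_i\log(1+\beta)\,e^{-(\Lambda_1+\Lambda_2)\beta^{2/\alpha}} . \] Then this game has a unique Nash equilibrium $(\Lambda_1^*,\Lambda_2^* )$; it is given by $\Lambda_1^*=N_1$ and $\Lambda_2^*=\min(x,N_2)$, where $x$ is the solution of \[ N_1=x\left(\frac{\alpha}{2\left(1+x^{\alpha/2}\right)\log\left(1+x^{-\alpha/2}\right)}-1\right). \]
   Context: A Nash equilibrium is a pair $(\Lambda_1^*,\Lambda_2^* )\in[0,N_1]\times[0,N_2]$ such that $\Lambda_1^*$ maximizes $U_1(\cdot,\Lambda_2^* )$ over $[0,N_1]$ and $\Lambda_2^*$ maximizes $U_2(\Lambda_1^*,\cdot)$ over $[0,N_2]$. Here $N_i$ is the average number of nodes per transmission disc of network $i$, $\Lambda_i$ is its average number of simultaneous transmissions per disc, and $\log$ is the natural logarithm. *)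

theory Defs
  imports "HOL-Analysis.Analysis"
begin

definition rag_payoff :: "real \<Rightarrow> real \<Rightarrow> real \<Rightarrow> real \<Rightarrow> real" where
  "rag_payoff \<alpha> own L1 L2 =
     (SUP \<beta>\<in>{0<..}. own * ln (1 + \<beta>) * exp (- (L1 + L2) * \<beta> powr (2 / \<alpha>)))"

definition U1 :: "real \<Rightarrow> real \<Rightarrow> real \<Rightarrow> real" where
  "U1 \<alpha> L1 L2 = rag_payoff \<alpha> L1 L1 L2"

definition U2 :: "real \<Rightarrow> real \<Rightarrow> real \<Rightarrow> real" where
  "U2 \<alpha> L1 L2 = rag_payoff \<alpha> L2 L1 L2"

definition nash_eq :: "real \<Rightarrow> real \<Rightarrow> real \<Rightarrow> real \<Rightarrow> real \<Rightarrow> bool" where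
  "nash_eq \<alpha> N1 N2 L1 L2 \<longleftrightarrow>
     L1 \<in> {0..N1} \<and> L2 \<in> {0..N2} \<and>
     (\<forall>l\<in>{0..N1}. U1 \<alpha> l L2 \<le> U1 \<alpha> L1 L2) \<and>
     (\<forall>l\<in>{0..N2}. U2 \<alpha> L1 l \<le> U2 \<alpha> L1 L2)"

end

theory Submission
  imports Defs "HOL-Analysis.Analysis"
begin

definition rr :: "real \<Rightarrow> real" where "rr y = (1 + y) * ln (1 + y) / y"

lemma rr_deriv:
  assumes "0 < y"
  shows "(rr has_real_derivative (y - ln (1 + y)) / y\<^sup>2) (at y)"
proof -
  have "((\<lambda>y. (1 + y) * ln (1 + y) / y) has_real_derivative
        ((1 * ln (1 + y) + (1 + y) * (1 / (1 + y))) * y - (1 + y) * ln (1 + y) * 1) / (y * y)) (at y)"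
    using assms by (auto intro!: derivative_eq_intros)
  moreover have "((1 * ln (1 + y) + (1 + y) * (1 / (1 + y))) * y - (1 + y) * ln (1 + y) * 1) / (y * y)
      = (y - ln (1 + y)) / y\<^sup>2"
    using assms by (simp add: field_simps power2_eq_square)
  ultimately show ?thesis unfolding rr_def[abs_def] by simp
qed

lemma rr_mono:
  assumes "0 < a" "a < b"
  shows "rr a < rr b"
proof (rule DERIV_pos_imp_increasing[OF assms(2)])
  fix x assume "a \<le> x" "x \<le> b"
  then have x: "0 < x" using assms by simp
  show "\<exists>y. (rr has_real_derivative y) (at x) \<and> 0 < y"
    using rr_deriv[OF x] ln_add_one_self_less_self[OF x] x by (intro exI[of _ "(x - ln (1 + x)) / x\<^sup>2"]) auto
qed

lemma rr_pos: "0 < y \<Longrightarrow> 0 < rr y"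
  unfolding rr_def by simp

definition EE :: "real \<Rightarrow> real \<Rightarrow> real" where "EE k t = t * rr (t powr k)"

lemma EE_mono:
  assumes "0 < k" "0 < a" "a < b"
  shows "EE k a < EE k b"
proof -
  have "a powr k < b powr k" using assms by (simp add: powr_less_mono2)
  then have "rr (a powr k) < rr (b powr k)" using assms by (intro rr_mono) auto
  moreover have "0 < rr (a powr k)" using assms by (intro rr_pos) auto
  ultimately show ?thesis unfolding EE_def using assms
    by (intro mult_strict_mono) auto
qed

lemma EE_pos: "0 < t \<Longrightarrow> 0 < EE k t"
  unfolding EE_def using rr_pos[of "t powr k"] by simp

lemma EE_mono_iff:
  assumes "0 < k" "0 < a" "0 < b"
  shows "EE k a < EE k b \<longleftrightarrow> a < b"
  using EE_mono[OF assms(1)] assms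
  by (metis less_asym linorder_neqE_linordered_idom)

definition psi :: "real \<Rightarrow> real \<Rightarrow> real" where
  "psi \<alpha> x = x * (\<alpha> / (2 * (1 + x powr (\<alpha> / 2)) * ln (1 + x powr (- \<alpha> / 2))) - 1)"

lemma psi_EE:
  assumes "0 < x" "0 < \<alpha>"
  shows "(psi \<alpha> x + x) * EE (\<alpha>/2) (1/x) = \<alpha> / 2"
proof -
  have p: "(1/x) powr (\<alpha>/2) = x powr (- \<alpha> / 2)"
    using assms by (simp add: powr_divide powr_minus_divide)
  have q: "x powr (- \<alpha> / 2) * x powr (\<alpha>/2) = 1" using assms
    by (simp add: powr_add[symmetric])
  have pos: "0 < x powr (- \<alpha> / 2)" using assms by simp
  have l: "0 < ln (1 + x powr (- \<alpha> / 2))" by (rule ln_gt_zero) (use pos in linarith)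
  have "EE (\<alpha>/2) (1/x) = (1 + x powr (- \<alpha> / 2)) * ln (1 + x powr (- \<alpha> / 2)) / (x * x powr (- \<alpha> / 2))"
    unfolding EE_def rr_def p by simp
  also have "\<dots> = (x powr (\<alpha>/2) + 1) * ln (1 + x powr (- \<alpha> / 2)) / x"
  proof -
    have "(1 + x powr (- \<alpha> / 2)) / (x * x powr (- \<alpha> / 2)) = (x powr (\<alpha>/2) + 1) / x"
      using q pos assms by (simp add: field_simps)
    then show ?thesis by (metis times_divide_eq_left mult.commute)
  qed
  finally have e: "EE (\<alpha>/2) (1/x) = (x powr (\<alpha>/2) + 1) * ln (1 + x powr (- \<alpha> / 2)) / x" .
  have "psi \<alpha> x + x = x * \<alpha> / (2 * (1 + x powr (\<alpha> / 2)) * ln (1 + x powr (- \<alpha> / 2)))"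
    unfolding psi_def by (simp add: algebra_simps)
  moreover have gen: "x * \<alpha> / (2 * (1 + Z) * LL) * ((Z + 1) * LL / x) = \<alpha> / 2"
    if "0 < Z" "0 < LL" for Z LL
  proof -
    have "(1+Z)*LL*x \<noteq> 0" using that assms by simp
    then show ?thesis by (simp add: divide_simps mult.commute mult.left_commute add.commute)
  qed
  ultimately show ?thesis using e l assms
    by (simp only:) (rule gen, simp_all)
qed

lemma psi_plus_pos:
  assumes "0 < x" "0 < \<alpha>"
  shows "0 < psi \<alpha> x + x"
proof -
  have "0 < x powr (- \<alpha> / 2)" using assms by simp
  then have "0 < ln (1 + x powr (- \<alpha> / 2))" by (intro ln_gt_zero) linarith
  moreover have "psi \<alpha> x + x = x * \<alpha> / (2 * (1 + x powr (\<alpha> / 2)) * ln (1 + x powr (- \<alpha> / 2)))"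
    unfolding psi_def by (simp add: algebra_simps)
  ultimately show ?thesis using assms by (simp add: add_pos_pos divide_pos_pos)
qed

lemma rr_gt1: "0 < y \<Longrightarrow> 1 < rr y"
proof -
  assume y: "0 < y"
  have "1 / (1 + y) < exp (- (y / (1 + y)))"
    using exp_minus_greater[of "y / (1 + y)"] y by (simp add: field_simps)
  then have "ln (1 / (1 + y)) < ln (exp (- (y / (1 + y))))"
    using y by (subst ln_less_cancel_iff) auto
  then have "y / (1 + y) < ln (1 + y)" using y by (simp add: ln_div)
  then have "y < (1 + y) * ln (1 + y)" using y by (simp add: field_simps)
  then show ?thesis unfolding rr_def using y by simp
qed

definition HH :: "real \<Rightarrow> real \<Rightarrow> real" where "HH k x = rr (x powr (-k))"

lemma psi_HH:
  assumes "0 < x" "0 < \<alpha>"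
  shows "psi \<alpha> x = x * (\<alpha> / 2 / HH (\<alpha>/2) x - 1)"
proof -
  have "EE (\<alpha>/2) (1/x) = HH (\<alpha>/2) x / x"
    unfolding EE_def HH_def using assms by (simp add: powr_divide powr_minus_divide)
  moreover have "0 < HH (\<alpha>/2) x" unfolding HH_def using assms by (intro rr_pos) simp
  ultimately have "(psi \<alpha> x + x) * HH (\<alpha>/2) x = ((psi \<alpha> x + x) * EE (\<alpha>/2) (1/x)) * x"
    using assms by simp
  also have "\<dots> = \<alpha> / 2 * x" using psi_EE[OF assms] by simp
  finally have "(psi \<alpha> x + x) * HH (\<alpha>/2) x = \<alpha> / 2 * x" .
  then show ?thesis using assms \<open>0 < HH (\<alpha>/2) x\<close> by (simp add: field_simps)
qed

lemma HH_mono: "0 < k \<Longrightarrow> 0 < x \<Longrightarrow> x < y \<Longrightarrow> HH k y < HH k x"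
  unfolding HH_def by (intro rr_mono) (auto intro: powr_less_mono2_neg)

lemma HH_gt1: "0 < x \<Longrightarrow> 1 < HH k x"
  unfolding HH_def by (intro rr_gt1) simp

lemma psi_lt_self:
  assumes "0 < x" "0 < \<alpha>" "\<alpha> < 4"
  shows "psi \<alpha> x < x"
proof -
  have "1 < HH (\<alpha>/2) x" by (rule HH_gt1[OF assms(1)])
  then have "\<alpha> / 2 / HH (\<alpha>/2) x < 2" using assms by (simp add: field_simps)
  then have "\<alpha> / 2 / HH (\<alpha>/2) x - 1 < 1" by linarith
  then have "x * (\<alpha> / 2 / HH (\<alpha>/2) x - 1) < x * 1" using assms(1) by (rule mult_strict_left_mono)
  then show ?thesis using psi_HH[OF assms(1,2)] by simp
qed

lemma psi_mono:
  assumes "0 < x" "x < y" "0 < \<alpha>" "0 < psi \<alpha> x"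
  shows "psi \<alpha> x < psi \<alpha> y"
proof -
  let ?k = "\<alpha>/2"
  have h: "HH ?k y < HH ?k x" using HH_mono assms by simp
  have hp: "0 < HH ?k y" using HH_gt1[of y ?k] assms by simp
  have "0 < ?k / HH ?k x - 1" using assms psi_HH[OF assms(1,3)]
    by (simp add: zero_less_mult_iff)
  moreover have "?k / HH ?k x < ?k / HH ?k y"
    using h hp assms by (intro divide_strict_left_mono) auto
  ultimately have "x * (?k / HH ?k x - 1) < y * (?k / HH ?k y - 1)"
    using assms by (intro mult_strict_mono) auto
  then show ?thesis using psi_HH assms by simp
qed

lemma one_plus_powr_ne [simp]: "1 + x powr p \<noteq> (0::real)" "2 + 2 * x powr p \<noteq> (0::real)"
  using powr_ge_zero[of x p] by linarith+

lemma psi_cont: "0 < a \<Longrightarrow> continuous_on {a..b} (psi \<alpha>)"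
  unfolding psi_def
  by (intro continuous_intros) (auto simp: add_pos_pos)

lemma psi_large:
  assumes "2 < \<alpha>" "\<alpha> < 4" "0 < c"
  obtains X where "0 < X" "c \<le> X" "c \<le> psi \<alpha> X"
proof -
  let ?k = "\<alpha>/2"
  define X where "X = max ((?k+1)/(?k-1)) (2*c/(?k-1))"
  have k1: "1 < ?k" using assms by simp
  have X1: "(?k+1)/(?k-1) \<le> X" "2*c/(?k-1) \<le> X" unfolding X_def by auto
  have "1 < (?k+1)/(?k-1)" using k1 by (simp add: field_simps)
  then have Xg1: "1 < X" using X1 by linarith
  have "X powr 1 \<le> X powr ?k" using Xg1 k1 by (intro powr_mono) auto
  then have Xk: "(?k+1)/(?k-1) \<le> X powr ?k" using X1 Xg1 by simp
  have Xkp: "0 < X powr ?k" using Xg1 by simp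
  have "X powr (-?k) = 1 / X powr ?k" using Xg1 by (simp add: powr_minus_divide)
  also have "\<dots> \<le> (?k-1)/(?k+1)"
    using Xk Xkp k1 by (simp add: divide_simps) (simp add: field_simps)
  finally have Xm: "X powr (-?k) \<le> (?k-1)/(?k+1)" .
  have "HH ?k X \<le> 1 + X powr (-?k)"
  proof -
    define u where "u = X powr (-?k)"
    have u: "0 < u" using Xg1 unfolding u_def by simp
    have "ln (1 + u) \<le> u" using u by (intro ln_add_one_self_le_self) simp
    then have w: "(1 + u) * ln (1 + u) \<le> (1 + u) * u"
      by (rule mult_left_mono) (use u in auto)
    have "(1 + u) * ln (1 + u) / u \<le> 1 + u"
      using w u by (simp add: pos_divide_le_eq mult.commute)
    then show ?thesis unfolding HH_def rr_def u_def .
  qed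
  also have "\<dots> \<le> 1 + (?k-1)/(?k+1)" using Xm by simp
  also have "\<dots> = 2 * ?k / (?k+1)" using k1 by (simp add: field_simps)
  finally have Hb: "HH ?k X \<le> 2 * ?k / (?k+1)" .
  have Hp: "0 < HH ?k X" using HH_gt1[of X ?k] Xg1 by simp
  have "(?k+1)/2 \<le> ?k / HH ?k X"
    using Hb Hp k1 by (simp add: divide_simps) (simp add: field_simps)
  then have q: "(?k-1)/2 \<le> ?k / HH ?k X - 1" by simp
  have "c \<le> X * ((?k-1)/2)" using X1(2) k1 by (simp add: field_simps)
  also have "\<dots> \<le> X * (?k / HH ?k X - 1)" by (rule mult_left_mono[OF q]) (use Xg1 in auto)
  also have "\<dots> = psi \<alpha> X" using psi_HH[of X \<alpha>] Xg1 assms by simp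
  finally have "c \<le> psi \<alpha> X" .
  moreover have "c \<le> 2*c/(?k-1)" using k1 assms by (simp add: field_simps)
  then have "c \<le> X" using X1(2) by linarith
  ultimately show ?thesis using that[of X] Xg1 by simp
qed

lemma psi_root_ex:
  assumes "2 < \<alpha>" "\<alpha> < 4" "0 < c"
  shows "\<exists>!x. 0 < x \<and> psi \<alpha> x = c"
proof -
  obtain X where X: "0 < X" "c \<le> X" "c \<le> psi \<alpha> X" using psi_large assms by blast
  have "psi \<alpha> c \<le> c" using psi_lt_self[of c \<alpha>] assms by simp
  then obtain x where x: "c \<le> x" "x \<le> X" "psi \<alpha> x = c"
    using IVT'[of "psi \<alpha>" c c X] X psi_cont[of c X \<alpha>] assms by auto
  have "0 < x" using x assms by simp
  moreover have "y = x" if "0 < y" "psi \<alpha> y = c" for y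
  proof (rule ccontr)
    assume "y \<noteq> x"
    then consider "y < x" | "x < y" by linarith
    then show False
    proof cases
      case 1 then show ?thesis using psi_mono[of y x \<alpha>] that x assms by simp
    next
      case 2 then show ?thesis using psi_mono[of x y \<alpha>] that x assms \<open>0 < x\<close> by simp
    qed
  qed
  ultimately show ?thesis using x by blast
qed

lemma psi_less_iff:
  assumes "2 < \<alpha>" "0 < c" "0 < x" "psi \<alpha> x = c" "0 < y"
  shows "psi \<alpha> y < c \<longleftrightarrow> y < x"
    and "c < psi \<alpha> y \<longleftrightarrow> x < y"
proof -
  have a: "psi \<alpha> y < c" if "y < x"
  proof (cases "0 < psi \<alpha> y")
    case True then show ?thesis using psi_mono[of y x \<alpha>] that assms by simp
  next
    case False then show ?thesis using assms by simp
  qed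
  have b: "c < psi \<alpha> y" if "x < y" using psi_mono[of x y \<alpha>] that assms by simp
  show "psi \<alpha> y < c \<longleftrightarrow> y < x" using a b assms
    by (cases y x rule: linorder_cases) auto
  show "c < psi \<alpha> y \<longleftrightarrow> x < y" using a b assms
    by (cases y x rule: linorder_cases) auto
qed

definition W :: "real \<Rightarrow> real \<Rightarrow> real \<Rightarrow> real" where
  "W k s t = ln (1 + t powr k) * exp (- s * t)"

lemma W_pos: "0 < t \<Longrightarrow> 0 < W k s t"
  unfolding W_def by (intro mult_pos_pos ln_gt_zero) auto

lemma W_small:
  assumes "1 \<le> k" "0 \<le> s" "0 < u" "u \<le> 1"
  shows "W k s u \<le> u"
proof -
  have "exp (- s * u) \<le> 1" using assms by simp
  moreover have "0 \<le> ln (1 + u powr k)" using assms by simp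
  ultimately have "W k s u \<le> ln (1 + u powr k)" unfolding W_def
    by (simp add: mult_left_le)
  also have "\<dots> \<le> u powr k" using assms by (intro ln_add_one_self_le_self) simp
  also have "\<dots> \<le> u powr 1" using assms by (intro powr_mono') auto
  finally show ?thesis using assms by simp
qed

lemma W_large:
  assumes "k \<le> 2" "0 < s" "1 \<le> u"
  shows "W k s u \<le> 27 / (s^3 * u)"
proof -
  have "exp (s * u / 3) \<ge> 1 + s * u / 3" by (rule exp_ge_add_one_self)
  then have "exp (s * u / 3) \<ge> s * u / 3" by linarith
  then have "exp (s * u / 3) ^ 3 \<ge> (s * u / 3) ^ 3"
    using assms by (intro power_mono) auto
  moreover have "exp (s * u / 3) ^ 3 = exp (s * u)"
    by (simp add: exp_of_nat_mult[symmetric])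
  ultimately have e: "exp (s * u) \<ge> s^3 * u^3 / 27" by (simp add: power_mult_distrib power_divide)
  have "ln (1 + u powr k) \<le> u powr k" using assms by (intro ln_add_one_self_le_self) simp
  also have "\<dots> \<le> u powr 2" using assms by (intro powr_mono) auto
  also have "\<dots> = u^2" using assms by (simp add: powr_realpow)
  finally have l: "ln (1 + u powr k) \<le> u^2" .
  have "W k s u = ln (1 + u powr k) / exp (s * u)" unfolding W_def by (simp add: exp_minus field_simps)
  also have "\<dots> \<le> u^2 / (s^3 * u^3 / 27)"
    using l e assms by (intro frac_le) auto
  also have "\<dots> = 27 / (s^3 * u)" using assms by (simp add: field_simps power_def)
  finally show ?thesis .
qed

lemma W_cont: "continuous_on {a..b} (W k s)" if "0 < a"
  unfolding W_def using that by (intro continuous_intros) auto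

lemma W_max_ex:
  assumes "1 \<le> k" "k \<le> 2" "0 < s"
  shows "\<exists>t>0. \<forall>u>0. W k s u \<le> W k s t"
proof -
  define v where "v = W k s 1"
  have v: "0 < v" unfolding v_def by (rule W_pos) simp
  define p where "p = min 1 (v/2)"
  define q where "q = 1 + 27 / (s^3 * v)"
  have p: "0 < p" "p \<le> 1" "p < v" using v unfolding p_def by auto
  have q: "1 \<le> q" "0 < 27 / (s^3 * v)" using v assms unfolding q_def by auto
  obtain t where t: "t \<in> {p..q}" "\<forall>u\<in>{p..q}. W k s u \<le> W k s t"
    using continuous_attains_sup[of "{p..q}" "W k s"] W_cont[of p q k s] p q by auto
  have one: "W k s 1 \<le> W k s t" using t p q by auto
  have "W k s u \<le> W k s t" if u: "0 < u" for u
  proof (cases "u < p")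
    case True
    then have "W k s u \<le> u" using W_small assms u p by simp
    then show ?thesis using one True p unfolding v_def by linarith
  next
    case False
    show ?thesis
    proof (cases "u \<le> q")
      case True then show ?thesis using False t by auto
    next
      case False2: False
      then have "W k s u \<le> 27 / (s^3 * u)" using W_large assms q by simp
      also have "\<dots> < v"
      proof -
        have "27 / (s^3 * v) < u" using False2 q unfolding q_def by linarith
        then have "27 < u * (s^3 * v)" using v assms by (simp add: field_simps)
        then show ?thesis using u assms by (simp add: field_simps mult.commute mult.left_commute)
      qed
      finally show ?thesis using one unfolding v_def by linarith
    qed
  qed
  moreover have "0 < t" using t p by auto
  ultimately show ?thesis by blast
qed

lemma W_deriv:
  assumes "0 < t"
  shows "(W k s has_real_derivative
     (k * t powr (k - 1) / (1 + t powr k) * exp (- s * t) - ln (1 + t powr k) * (s * exp (- s * t)))) (at t)"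
proof -
  have "((\<lambda>t. ln (1 + t powr k) * exp (- s * t)) has_real_derivative
     ((k * t powr (k - 1)) / (1 + t powr k) * exp (- s * t) + ln (1 + t powr k) * (exp (- s * t) * (- s)))) (at t)"
    using assms by (auto intro!: derivative_eq_intros simp: add_pos_pos)
  then show ?thesis unfolding W_def[abs_def] by (simp add: algebra_simps)
qed

lemma W_foc:
  assumes "0 < k" "0 < t" "\<forall>u>0. W k s u \<le> W k s t"
  shows "s * EE k t = k"
proof -
  have "k * t powr (k - 1) / (1 + t powr k) * exp (- s * t) - ln (1 + t powr k) * (s * exp (- s * t)) = 0"
  proof (rule DERIV_local_max[OF W_deriv[OF assms(2)]])
    show "0 < t" by fact
    show "\<forall>y. \<bar>t - y\<bar> < t \<longrightarrow> W k s y \<le> W k s t" using assms(3) by auto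
  qed
  then have "(k * t powr (k - 1) / (1 + t powr k) - s * ln (1 + t powr k)) * exp (- s * t) = 0"
    by (simp add: algebra_simps)
  then have "k * t powr (k - 1) / (1 + t powr k) = s * ln (1 + t powr k)"
    by simp
  then have eq: "k * t powr (k - 1) = s * ln (1 + t powr k) * (1 + t powr k)"
    by (simp add: field_simps add_pos_pos)
  have tk: "t * t powr (k - 1) = t powr k" using assms by (simp add: powr_mult_base)
  have "s * EE k t = t * (s * ln (1 + t powr k) * (1 + t powr k)) / t powr k"
    unfolding EE_def rr_def by (simp add: algebra_simps)
  also have "\<dots> = t * (k * t powr (k - 1)) / t powr k" by (simp only: eq[symmetric])
  also have "t * (k * t powr (k - 1)) = k * t powr k" by (metis tk mult.left_commute)
  also have "k * t powr k / t powr k = k" using assms by simp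
  finally show ?thesis .
qed

definition tau :: "real \<Rightarrow> real \<Rightarrow> real" where
  "tau k s = (SOME t. 0 < t \<and> (\<forall>u>0. W k s u \<le> W k s t))"

definition gg :: "real \<Rightarrow> real \<Rightarrow> real" where "gg k s = W k s (tau k s)"

lemma tau:
  assumes "1 \<le> k" "k \<le> 2" "0 < s"
  shows "0 < tau k s" "\<And>u. 0 < u \<Longrightarrow> W k s u \<le> gg k s"
proof -
  have "0 < tau k s \<and> (\<forall>u>0. W k s u \<le> W k s (tau k s))"
    unfolding tau_def using W_max_ex[OF assms] by (rule someI_ex[where P = "\<lambda>t. 0 < t \<and> (\<forall>u>0. W k s u \<le> W k s t)"]) 
  then show "0 < tau k s" "\<And>u. 0 < u \<Longrightarrow> W k s u \<le> gg k s" unfolding gg_def by auto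
qed

lemma gg_pos: "1 \<le> k \<Longrightarrow> k \<le> 2 \<Longrightarrow> 0 < s \<Longrightarrow> 0 < gg k s"
  unfolding gg_def using tau(1) W_pos by blast

lemma gg_foc: "1 \<le> k \<Longrightarrow> k \<le> 2 \<Longrightarrow> 0 < s \<Longrightarrow> s * EE k (tau k s) = k"
  using W_foc[of k "tau k s" s] tau[of k s] unfolding gg_def by auto

lemma gg_support:
  assumes "1 \<le> k" "k \<le> 2" "0 < s" "0 < s'"
  shows "gg k s * exp (- (s' - s) * tau k s) \<le> gg k s'"
proof -
  have "W k s' (tau k s) = gg k s * exp (- (s' - s) * tau k s)"
    unfolding gg_def W_def by (simp add: mult.assoc exp_add[symmetric] algebra_simps)
  then show ?thesis using tau(2)[OF assms(1,2,4) tau(1)[OF assms(1-3)]] by simp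
qed

lemma lngg_support:
  assumes "1 \<le> k" "k \<le> 2" "0 < s" "0 < s'"
  shows "ln (gg k s) - (s' - s) * tau k s \<le> ln (gg k s')"
proof -
  have "ln (gg k s * exp (- (s' - s) * tau k s)) \<le> ln (gg k s')"
    using gg_support[OF assms] gg_pos assms by (subst ln_le_cancel_iff) auto
  then show ?thesis using gg_pos[OF assms(1-3)] by (simp add: ln_mult left_diff_distrib)
qed

lemma lngg_convex:
  assumes "1 \<le> k" "k \<le> 2"
  shows "convex_on {0<..} (\<lambda>s. ln (gg k s))"
  unfolding convex_on_def
proof (intro conjI ballI allI impI)
  show "convex {0::real<..}" by simp
  fix x y :: real and u v :: real
  assume xy: "x \<in> {0<..}" "y \<in> {0<..}" and uv: "0 \<le> u" "0 \<le> v" "u + v = 1"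
  define z where "z = u * x + v * y"
  have z: "0 < z"
  proof (cases "u = 0")
    case True then show ?thesis using uv xy unfolding z_def by simp
  next
    case False then have "0 < u * x" using uv xy by simp
    moreover have "0 \<le> v * y" using uv xy by simp
    ultimately show ?thesis unfolding z_def by linarith
  qed
  have hx: "ln (gg k z) - (x - z) * tau k z \<le> ln (gg k x)" using lngg_support assms z xy by simp
  have hy: "ln (gg k z) - (y - z) * tau k z \<le> ln (gg k y)" using lngg_support assms z xy by simp
  have "u * (ln (gg k z) - (x - z) * tau k z) + v * (ln (gg k z) - (y - z) * tau k z)
        \<le> u * ln (gg k x) + v * ln (gg k y)"
    using hx hy uv by (intro add_mono mult_left_mono) auto
  moreover have "u * (ln (gg k z) - (x - z) * tau k z) + v * (ln (gg k z) - (y - z) * tau k z)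
        = (u + v) * ln (gg k z) - (u * x + v * y - (u + v) * z) * tau k z"
    by (simp add: algebra_simps)
  ultimately have "ln (gg k z) \<le> u * ln (gg k x) + v * ln (gg k y)"
    using uv unfolding z_def by simp
  then show "ln (gg k (u *\<^sub>R x + v *\<^sub>R y)) \<le> u * ln (gg k x) + v * ln (gg k y)"
    unfolding z_def by simp
qed

lemma gg_cont:
  assumes "1 \<le> k" "k \<le> 2"
  shows "continuous_on {0<..} (gg k)"
proof -
  have c: "continuous_on {0<..} (\<lambda>s. ln (gg k s))"
    using convex_on_continuous[OF _ lngg_convex[OF assms]] by simp
  have "continuous_on {0<..} (\<lambda>s. exp (ln (gg k s)))"
    using c by (rule continuous_on_exp)
  moreover have "\<And>s. s \<in> {0<..} \<Longrightarrow> exp (ln (gg k s)) = gg k s" using gg_pos assms by simp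
  ultimately show ?thesis using continuous_on_cong by (metis (no_types, lifting))
qed

lemma payoff_eq:
  assumes "2 \<le> \<alpha>" "\<alpha> \<le> 4" "0 \<le> own" "0 < L1 + L2"
  shows "rag_payoff \<alpha> own L1 L2 = own * gg (\<alpha>/2) (L1 + L2)"
proof -
  let ?k = "\<alpha>/2" and ?S = "L1 + L2"
  have k: "1 \<le> ?k" "?k \<le> 2" using assms by auto
  let ?f = "\<lambda>\<beta>. own * ln (1 + \<beta>) * exp (- (L1 + L2) * \<beta> powr (2 / \<alpha>))"
  have fW: "?f \<beta> = own * W ?k ?S (\<beta> powr (2 / \<alpha>))" if "0 < \<beta>" for \<beta>
  proof -
    have "(\<beta> powr (2 / \<alpha>)) powr ?k = \<beta>" using that assms by (simp add: powr_powr)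
    then show ?thesis unfolding W_def by simp
  qed
  define t where "t = tau ?k ?S"
  have t: "0 < t" unfolding t_def using tau(1)[OF k assms(4)] .
  have b0: "0 < t powr ?k" using t by simp
  have "(t powr ?k) powr (2 / \<alpha>) = t" using t assms by (simp add: powr_powr)
  then have eq1: "?f (t powr ?k) = own * gg ?k ?S" using fW[OF b0] unfolding gg_def t_def by simp
  have le: "?f \<beta> \<le> own * gg ?k ?S" if "0 < \<beta>" for \<beta>
  proof -
    have "own * W ?k ?S (\<beta> powr (2 / \<alpha>)) \<le> own * gg ?k ?S"
      by (rule mult_left_mono[OF tau(2)[OF k assms(4)]]) (use that assms(3) in simp_all)
    then show ?thesis by (subst fW[OF that])
  qed
  have mem: "own * gg ?k ?S \<in> ?f ` {0<..}"
  proof (rule image_eqI)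
    show "own * gg ?k ?S = ?f (t powr ?k)" by (rule eq1[symmetric])
    show "t powr ?k \<in> {0<..}" using b0 by simp
  qed
  have le2: "\<And>y. y \<in> ?f ` {0<..} \<Longrightarrow> y \<le> own * gg ?k ?S" using le by auto
  show ?thesis unfolding rag_payoff_def by (rule cSup_eq_maximum[OF mem le2])
qed

lemma payoff_zero: "rag_payoff \<alpha> 0 L1 L2 = 0"
  unfolding rag_payoff_def by simp

definition PP :: "real \<Rightarrow> real \<Rightarrow> real \<Rightarrow> real" where "PP \<alpha> c L = L * gg (\<alpha>/2) (L + c)"

definition xc :: "real \<Rightarrow> real \<Rightarrow> real" where "xc \<alpha> c = (THE x. 0 < x \<and> psi \<alpha> x = c)"

lemma xc:
  assumes "2 < \<alpha>" "\<alpha> < 4" "0 < c"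
  shows "0 < xc \<alpha> c" "psi \<alpha> (xc \<alpha> c) = c"
  using theI'[OF psi_root_ex[OF assms]] unfolding xc_def by auto

lemma xc_unique:
  assumes "2 < \<alpha>" "\<alpha> < 4" "0 < c" "0 < x" "psi \<alpha> x = c"
  shows "xc \<alpha> c = x"
  using psi_root_ex[OF assms(1-3)] xc[OF assms(1-3)] assms(4,5) by blast

lemma tau_vs:
  assumes "2 < \<alpha>" "\<alpha> < 4" "0 < c" "0 < L"
  shows "psi \<alpha> L < c \<Longrightarrow> tau (\<alpha>/2) (L + c) < 1 / L"
    and "c < psi \<alpha> L \<Longrightarrow> 1 / L < tau (\<alpha>/2) (L + c)"
proof -
  let ?k = "\<alpha>/2" and ?t = "tau (\<alpha>/2) (L + c)"
  have k: "1 \<le> ?k" "?k \<le> 2" "0 < ?k" using assms by auto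
  have s: "0 < L + c" using assms by simp
  have t: "0 < ?t" using tau(1)[OF k(1,2) s] .
  have f1: "(L + c) * EE ?k ?t = ?k" using gg_foc[OF k(1,2) s] .
  have f2: "(psi \<alpha> L + L) * EE ?k (1/L) = ?k" using psi_EE[of L \<alpha>] assms by simp
  have pp: "0 < psi \<alpha> L + L" using psi_plus_pos[of L \<alpha>] assms by simp
  have e1: "0 < EE ?k ?t" using EE_pos[OF t] .
  have e2: "0 < EE ?k (1/L)" using EE_pos[of "1/L"] assms by simp
  show "tau (\<alpha>/2) (L + c) < 1 / L" if "psi \<alpha> L < c"
  proof -
    have "EE ?k ?t < EE ?k (1/L)"
    proof (rule ccontr)
      assume "\<not> ?thesis"
      then have "EE ?k (1/L) \<le> EE ?k ?t" by simp
      then have "(psi \<alpha> L + L) * EE ?k (1/L) \<le> (psi \<alpha> L + L) * EE ?k ?t"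
        using pp by (intro mult_left_mono) auto
      also have "\<dots> < (L + c) * EE ?k ?t" using that e1 by (intro mult_strict_right_mono) auto
      finally show False using f1 f2 by simp
    qed
    then show ?thesis using EE_mono_iff[OF k(3) t, of "1/L"] assms by simp
  qed
  show "1 / L < tau (\<alpha>/2) (L + c)" if "c < psi \<alpha> L"
  proof -
    have "EE ?k (1/L) < EE ?k ?t"
    proof (rule ccontr)
      assume "\<not> ?thesis"
      then have "EE ?k ?t \<le> EE ?k (1/L)" by simp
      then have "(L + c) * EE ?k ?t \<le> (L + c) * EE ?k (1/L)"
        using s by (intro mult_left_mono) auto
      also have "\<dots> < (psi \<alpha> L + L) * EE ?k (1/L)" using that e2 by (intro mult_strict_right_mono) auto
      finally show False using f1 f2 by simp
    qed
    then show ?thesis using EE_mono_iff[OF k(3), of "1/L" ?t] assms t by simp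
  qed
qed

lemma PP_right:
  assumes "2 < \<alpha>" "\<alpha> < 4" "0 < c" "0 < L" "tau (\<alpha>/2) (L + c) < 1 / L"
    "L < L'" "L' < 1 / tau (\<alpha>/2) (L + c)"
  shows "PP \<alpha> c L < PP \<alpha> c L'"
proof -
  let ?k = "\<alpha>/2" and ?t = "tau (\<alpha>/2) (L + c)"
  have k: "1 \<le> ?k" "?k \<le> 2" using assms by auto
  have t: "0 < ?t" using tau(1)[OF k] assms by simp
  have L': "0 < L'" using assms by simp
  have g: "0 < gg ?k (L + c)" using gg_pos[OF k] assms by simp
  have sup: "gg ?k (L + c) * exp (- ((L' + c) - (L + c)) * ?t) \<le> gg ?k (L' + c)"
    using gg_support[OF k, of "L + c" "L' + c"] assms by simp
  have "ln L - ln L' \<le> (L - L') / L'" using ln_diff_le[of L L'] assms by simp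
  moreover have "?t < 1 / L'" using assms t by (simp add: field_simps)
  then have "(L' - L) * ?t < (L' - L) * (1 / L')" using assms by (intro mult_strict_left_mono) auto
  moreover have "(L - L') / L' = - ((L' - L) * (1 / L'))" by (simp add: diff_divide_distrib)
  ultimately have "ln L < ln L' - (L' - L) * ?t" by linarith
  then have "exp (ln L) < exp (ln L' - (L' - L) * ?t)" by simp
  then have a: "L < exp (ln L' - (L' - L) * ?t)" using assms(4) by simp
  have eq: "exp (ln L' - (L' - L) * ?t) = L' * exp (- (L' - L) * ?t)"
    by (simp only: exp_diff exp_ln[OF L'] mult_minus_left exp_minus divide_inverse)
  have "L < L' * exp (- (L' - L) * ?t)" using a unfolding eq .
  then have "L * gg ?k (L + c) < L' * exp (- (L' - L) * ?t) * gg ?k (L + c)"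
    using g by (intro mult_strict_right_mono) auto
  also have "\<dots> = L' * (gg ?k (L + c) * exp (- ((L' + c) - (L + c)) * ?t))" by simp
  also have "\<dots> \<le> L' * gg ?k (L' + c)" using sup L' by (intro mult_left_mono) auto
  finally show ?thesis unfolding PP_def .
qed

lemma PP_left:
  assumes "2 < \<alpha>" "\<alpha> < 4" "0 < c" "0 < L" "1 / L < tau (\<alpha>/2) (L + c)"
    "L'' < L" "1 / tau (\<alpha>/2) (L + c) < L''"
  shows "PP \<alpha> c L < PP \<alpha> c L''"
proof -
  let ?k = "\<alpha>/2" and ?t = "tau (\<alpha>/2) (L + c)"
  have k: "1 \<le> ?k" "?k \<le> 2" using assms by auto
  have t: "0 < ?t" using tau(1)[OF k] assms by simp
  have L'': "0 < L''" using assms t by (smt (verit) divide_pos_pos zero_less_one)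
  have g: "0 < gg ?k (L + c)" using gg_pos[OF k] assms by simp
  have sup: "gg ?k (L + c) * exp (- ((L'' + c) - (L + c)) * ?t) \<le> gg ?k (L'' + c)"
    using gg_support[OF k, of "L + c" "L'' + c"] assms L'' by simp
  have "ln L - ln L'' \<le> (L - L'') / L''" using ln_diff_le[of L L''] assms L'' by simp
  moreover have "1 / L'' < ?t" using assms t L'' by (simp add: field_simps)
  then have "(L - L'') * (1 / L'') < (L - L'') * ?t" using assms by (intro mult_strict_left_mono) auto
  ultimately have "ln L < ln L'' + (L - L'') * ?t" by (simp add: field_simps)
  then have "exp (ln L) < exp (ln L'' + (L - L'') * ?t)" by simp
  then have "L < L'' * exp ((L - L'') * ?t)" using assms L'' by (simp add: exp_add)
  then have "L * gg ?k (L + c) < L'' * exp ((L - L'') * ?t) * gg ?k (L + c)"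
    using g by (intro mult_strict_right_mono) auto
  also have "\<dots> = L'' * (gg ?k (L + c) * exp (- ((L'' + c) - (L + c)) * ?t))" by simp
  also have "\<dots> \<le> L'' * gg ?k (L'' + c)" using sup L'' by (intro mult_left_mono) auto
  finally show ?thesis unfolding PP_def .
qed

lemma PP_cont:
  assumes "2 < \<alpha>" "\<alpha> < 4" "0 < c" "0 < a"
  shows "continuous_on {a..b} (PP \<alpha> c)"
proof -
  have k: "1 \<le> \<alpha>/2" "\<alpha>/2 \<le> 2" using assms by auto
  have "continuous_on {a..b} (\<lambda>L. gg (\<alpha>/2) (L + c))"
    by (rule continuous_on_compose2[OF gg_cont[OF k]]) (use assms in \<open>auto intro!: continuous_intros\<close>)
  then show ?thesis unfolding PP_def[abs_def] by (intro continuous_intros)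
qed

lemma maxpt:
  assumes "2 < \<alpha>" "\<alpha> < 4" "0 < c" "0 < a" "m \<in> {a..b}" "\<forall>y\<in>{a..b}. PP \<alpha> c y \<le> PP \<alpha> c m"
  shows "m < b \<Longrightarrow> xc \<alpha> c \<le> m" and "a < m \<Longrightarrow> m \<le> xc \<alpha> c"
proof -
  let ?t = "tau (\<alpha>/2) (m + c)"
  have k: "1 \<le> \<alpha>/2" "\<alpha>/2 \<le> 2" using assms by auto
  have m: "0 < m" using assms by auto
  have t: "0 < ?t" using tau(1)[OF k] assms m by simp
  have x: "0 < xc \<alpha> c" "psi \<alpha> (xc \<alpha> c) = c" using xc assms by auto
  note pl = psi_less_iff[OF assms(1,3) x m]
  show "xc \<alpha> c \<le> m" if mb: "m < b"
  proof (rule ccontr)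
    assume "\<not> ?thesis"
    then have "psi \<alpha> m < c" using pl by simp
    then have tl: "?t < 1 / m" using tau_vs(1)[OF assms(1-3) m] by simp
    then have m1: "m < 1 / ?t" using t m by (simp add: field_simps)
    define L' where "L' = min b ((m + 1 / ?t) / 2)"
    have L': "m < L'" "L' < 1 / ?t" "L' \<in> {a..b}" using mb m1 assms(5) unfolding L'_def by (auto simp: min_less_iff_disj)
    have "PP \<alpha> c m < PP \<alpha> c L'" using PP_right[OF assms(1-3) m tl L'(1,2)] .
    then show False using assms(6) L'(3) by force
  qed
  show "m \<le> xc \<alpha> c" if am: "a < m"
  proof (rule ccontr)
    assume "\<not> ?thesis"
    then have "c < psi \<alpha> m" using pl by simp
    then have tl: "1 / m < ?t" using tau_vs(2)[OF assms(1-3) m] by simp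
    then have m1: "1 / ?t < m" using t m by (simp add: field_simps)
    define L'' where "L'' = max a ((m + 1 / ?t) / 2)"
    have L'': "L'' < m" "1 / ?t < L''" "L'' \<in> {a..b}" using am m1 assms(5) unfolding L''_def by (auto simp: less_max_iff_disj)
    have "PP \<alpha> c m < PP \<alpha> c L''" using PP_left[OF assms(1-3) m tl L''(1,2)] .
    then show False using assms(6) L''(3) by force
  qed
qed

lemma PP_pos: "2 < \<alpha> \<Longrightarrow> \<alpha> < 4 \<Longrightarrow> 0 < c \<Longrightarrow> 0 < L \<Longrightarrow> 0 < PP \<alpha> c L"
  unfolding PP_def using gg_pos[of "\<alpha>/2" "L + c"] by simp

lemma PP_zero: "PP \<alpha> c 0 = 0" unfolding PP_def by simp

lemma BR_strict:
  assumes "2 < \<alpha>" "\<alpha> < 4" "0 < c" "0 < N" "L \<in> {0..N}" "L \<noteq> min N (xc \<alpha> c)"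
  shows "PP \<alpha> c L < PP \<alpha> c (min N (xc \<alpha> c))"
proof -
  define T where "T = min N (xc \<alpha> c)"
  have x: "0 < xc \<alpha> c" using xc assms by auto
  have T: "0 < T" "T \<le> N" "T \<le> xc \<alpha> c" using x assms unfolding T_def by auto
  have LT: "L \<noteq> T" using assms unfolding T_def by simp
  show ?thesis
  proof (cases "L = 0")
    case True then show ?thesis using PP_pos[OF assms(1-3) T(1)] PP_zero unfolding T_def by simp
  next
    case False
    then have L0: "0 < L" using assms by simp
    define a where "a = min L T"
    define b where "b = max L T"
    have a: "0 < a" "a \<le> b" using L0 T unfolding a_def b_def by auto
    have uniq: "m = T" if m: "m \<in> {a..b}" "\<forall>y\<in>{a..b}. PP \<alpha> c y \<le> PP \<alpha> c m" for m
    proof (cases "L < T")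
      case True
      then have ab: "a = L" "b = T" unfolding a_def b_def by auto
      show ?thesis
      proof (rule ccontr)
        assume "m \<noteq> T"
        then have "m < b" using m ab by auto
        then have "xc \<alpha> c \<le> m" using maxpt(1)[OF assms(1-3) a(1) m] by simp
        then show False using \<open>m < b\<close> ab T by simp
      qed
    next
      case False
      then have TL: "T < L" using LT by simp
      then have Tx: "T = xc \<alpha> c" using assms(5) unfolding T_def by auto
      have ab: "a = T" "b = L" using TL unfolding a_def b_def by auto
      show ?thesis
      proof (rule ccontr)
        assume "m \<noteq> T"
        then have "a < m" using m ab by auto
        then have "m \<le> xc \<alpha> c" using maxpt(2)[OF assms(1-3) a(1) m] by simp
        then show False using \<open>a < m\<close> ab Tx by simp
      qed
    qed
    obtain m where m: "m \<in> {a..b}" "\<forall>y\<in>{a..b}. PP \<alpha> c y \<le> PP \<alpha> c m"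
      using continuous_attains_sup[of "{a..b}" "PP \<alpha> c"] PP_cont[OF assms(1-3) a(1)] a by auto
    have mT: "m = T" using uniq m by blast
    have Lab: "L \<in> {a..b}" unfolding a_def b_def by auto
    have le: "PP \<alpha> c L \<le> PP \<alpha> c T" using m Lab mT by auto
    show ?thesis
    proof (rule ccontr)
      assume "\<not> PP \<alpha> c L < PP \<alpha> c (min N (xc \<alpha> c))"
      then have "PP \<alpha> c T \<le> PP \<alpha> c L" unfolding T_def by simp
      then have "\<forall>y\<in>{a..b}. PP \<alpha> c y \<le> PP \<alpha> c L" using m mT by force
      then have "L = T" using uniq Lab by blast
      then show False using LT by simp
    qed
  qed
qed

lemma BR:
  assumes "2 < \<alpha>" "\<alpha> < 4" "0 < c" "0 < N"
  shows "(L \<in> {0..N} \<and> (\<forall>l\<in>{0..N}. PP \<alpha> c l \<le> PP \<alpha> c L)) \<longleftrightarrow> L = min N (xc \<alpha> c)"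
proof -
  have x: "0 < xc \<alpha> c" using xc assms by auto
  have T: "min N (xc \<alpha> c) \<in> {0..N}" using x assms by auto
  show ?thesis
  proof
    assume h: "L \<in> {0..N} \<and> (\<forall>l\<in>{0..N}. PP \<alpha> c l \<le> PP \<alpha> c L)"
    show "L = min N (xc \<alpha> c)"
    proof (rule ccontr)
      assume "L \<noteq> min N (xc \<alpha> c)"
      then have "PP \<alpha> c L < PP \<alpha> c (min N (xc \<alpha> c))" using BR_strict assms h by blast
      moreover have "PP \<alpha> c (min N (xc \<alpha> c)) \<le> PP \<alpha> c L" using h T by blast
      ultimately show False by linarith
    qed
  next
    assume L: "L = min N (xc \<alpha> c)"
    have "PP \<alpha> c l \<le> PP \<alpha> c L" if "l \<in> {0..N}" for l
      using BR_strict[OF assms that] L by (cases "l = L") auto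
    then show "L \<in> {0..N} \<and> (\<forall>l\<in>{0..N}. PP \<alpha> c l \<le> PP \<alpha> c L)" using L T by auto
  qed
qed

lemma PP_pos': "2 < \<alpha> \<Longrightarrow> \<alpha> < 4 \<Longrightarrow> 0 \<le> c \<Longrightarrow> 0 < L \<Longrightarrow> 0 < PP \<alpha> c L"
  unfolding PP_def using gg_pos[of "\<alpha>/2" "L + c"] by simp

lemma U1_PP:
  assumes "2 < \<alpha>" "\<alpha> < 4" "0 \<le> l" "0 \<le> L2"
  shows "U1 \<alpha> l L2 = PP \<alpha> L2 l"
proof (cases "l = 0")
  case True then show ?thesis unfolding U1_def using payoff_zero PP_zero by simp
next
  case False
  then show ?thesis unfolding U1_def PP_def using payoff_eq[of \<alpha> l l L2] assms by simp
qed

lemma U2_PP: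
  assumes "2 < \<alpha>" "\<alpha> < 4" "0 \<le> l" "0 \<le> L1"
  shows "U2 \<alpha> L1 l = PP \<alpha> L1 l"
proof (cases "l = 0")
  case True then show ?thesis unfolding U2_def using payoff_zero PP_zero by simp
next
  case False
  then show ?thesis unfolding U2_def PP_def using payoff_eq[of \<alpha> l L1 l] assms by (simp add: add.commute)
qed

lemma nash_PP:
  assumes "2 < \<alpha>" "\<alpha> < 4"
  shows "nash_eq \<alpha> N1 N2 L1 L2 \<longleftrightarrow>
     L1 \<in> {0..N1} \<and> L2 \<in> {0..N2} \<and>
     (\<forall>l\<in>{0..N1}. PP \<alpha> L2 l \<le> PP \<alpha> L2 L1) \<and>
     (\<forall>l\<in>{0..N2}. PP \<alpha> L1 l \<le> PP \<alpha> L1 L2)"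
  unfolding nash_eq_def using U1_PP[OF assms] U2_PP[OF assms] by auto

lemma xc_gt:
  assumes "2 < \<alpha>" "\<alpha> < 4" "0 < c"
  shows "c < xc \<alpha> c"
  using psi_lt_self[of "xc \<alpha> c" \<alpha>] xc[OF assms] assms by simp

theorem theorem2:
  fixes \<alpha> N1 N2 :: real
  assumes "2 < \<alpha>" and "\<alpha> < 4" and "0 < N1" and "N1 \<le> N2"
  shows "(\<exists>!x. 0 < x \<and>
            N1 = x * (\<alpha> / (2 * (1 + x powr (\<alpha> / 2)) * ln (1 + x powr (- \<alpha> / 2))) - 1))
       \<and> (\<forall>x. 0 < x \<and>
            N1 = x * (\<alpha> / (2 * (1 + x powr (\<alpha> / 2)) * ln (1 + x powr (- \<alpha> / 2))) - 1)
            \<longrightarrow> {(L1, L2). nash_eq \<alpha> N1 N2 L1 L2} = {(N1, min x N2)})"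
proof -
  have eqv: "(0 < x \<and> N1 = x * (\<alpha> / (2 * (1 + x powr (\<alpha> / 2)) * ln (1 + x powr (- \<alpha> / 2))) - 1))
     \<longleftrightarrow> (0 < x \<and> psi \<alpha> x = N1)" for x
    unfolding psi_def by auto
  have N2: "0 < N2" using assms by simp
  show ?thesis
  proof (intro conjI allI impI)
    show "\<exists>!x. 0 < x \<and> N1 = x * (\<alpha> / (2 * (1 + x powr (\<alpha> / 2)) * ln (1 + x powr (- \<alpha> / 2))) - 1)"
      unfolding eqv using psi_root_ex[OF assms(1-3)] .
    fix x
    assume "0 < x \<and> N1 = x * (\<alpha> / (2 * (1 + x powr (\<alpha> / 2)) * ln (1 + x powr (- \<alpha> / 2))) - 1)"
    then have x: "0 < x" "psi \<alpha> x = N1" using eqv by auto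
    have xx: "xc \<alpha> N1 = x" using xc_unique[OF assms(1-3) x] .
    have N1x: "N1 < x" using psi_lt_self[of x \<alpha>] x assms by simp
    show "{(L1, L2). nash_eq \<alpha> N1 N2 L1 L2} = {(N1, min x N2)}"
    proof (intro equalityI subsetI)
      fix p assume "p \<in> {(L1, L2). nash_eq \<alpha> N1 N2 L1 L2}"
      then obtain L1 L2 where p: "p = (L1, L2)" and ne: "nash_eq \<alpha> N1 N2 L1 L2" by auto
      note n = ne[unfolded nash_PP[OF assms(1,2)]]
      have L1: "0 < L1"
      proof (rule ccontr)
        assume "\<not> 0 < L1"
        then have "L1 = 0" using n by auto
        moreover have "0 < PP \<alpha> L2 N1" using PP_pos'[OF assms(1,2) _ assms(3)] n by auto
        moreover have "PP \<alpha> L2 N1 \<le> PP \<alpha> L2 L1" using n assms(3) by auto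
        ultimately show False using PP_zero by simp
      qed
      have L2: "0 < L2"
      proof (rule ccontr)
        assume "\<not> 0 < L2"
        then have "L2 = 0" using n by auto
        moreover have "0 < PP \<alpha> L1 N2" using PP_pos'[OF assms(1,2) _ N2] L1 by auto
        moreover have "PP \<alpha> L1 N2 \<le> PP \<alpha> L1 L2" using n N2 by auto
        ultimately show False using PP_zero by simp
      qed
      have b1: "L1 = min N1 (xc \<alpha> L2)" using BR[OF assms(1,2) L2 assms(3), of L1] n by blast
      have b2: "L2 = min N2 (xc \<alpha> L1)" using BR[OF assms(1,2) L1 N2, of L2] n by blast
      have g1: "L1 < xc \<alpha> L1" using xc_gt[OF assms(1,2) L1] .
      have g2: "L2 < xc \<alpha> L2" using xc_gt[OF assms(1,2) L2] .
      have L1N: "L1 = N1"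
      proof (rule ccontr)
        assume "L1 \<noteq> N1"
        then have "L1 = xc \<alpha> L2" "L1 < N1" using b1 by (auto simp: min_def split: if_splits)
        then have "L2 < L1" using g2 by simp
        then show False using b2 g1 \<open>L1 < N1\<close> assms(4) by (auto simp: min_def split: if_splits)
      qed
      then have "L2 = min x N2" using b2 xx by (simp add: min.commute)
      then show "p \<in> {(N1, min x N2)}" using p L1N by simp
    next
      fix p assume "p \<in> {(N1, min x N2)}"
      then have p: "p = (N1, min x N2)" by simp
      define T where "T = min x N2"
      have T: "0 < T" "N1 \<le> T" using x N1x assms N2 unfolding T_def by auto
      have b2: "T = min N2 (xc \<alpha> N1)" unfolding T_def xx by (simp add: min.commute)
      have "psi \<alpha> N1 < T" using psi_lt_self[of N1 \<alpha>] assms T by simp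
      then have "N1 < xc \<alpha> T"
        using psi_less_iff(1)[OF assms(1) T(1) xc[OF assms(1,2) T(1)] assms(3)] by simp
      then have b1: "N1 = min N1 (xc \<alpha> T)" by simp
      have c1: "N1 \<in> {0..N1} \<and> (\<forall>l\<in>{0..N1}. PP \<alpha> T l \<le> PP \<alpha> T N1)"
        using BR[OF assms(1,2) T(1) assms(3), of N1] b1 by simp
      have c2: "T \<in> {0..N2} \<and> (\<forall>l\<in>{0..N2}. PP \<alpha> N1 l \<le> PP \<alpha> N1 T)"
        using BR[OF assms(1,2) assms(3) N2, of T] b2 by simp
      have "nash_eq \<alpha> N1 N2 N1 T" unfolding nash_PP[OF assms(1,2)] using c1 c2 by simp
      then show "p \<in> {(L1, L2). nash_eq \<alpha> N1 N2 L1 L2}" using p unfolding T_def by simp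
    qed
  qed
qed

end
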